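(* Let $0<l<m<\infty$ and let $\beta,\gamma,\mu:[0,m]\times\mathbb{R}^2_+\to[0,\infty)$ be continuous, with $\beta(s,\cdot,\cdot)=0$ for $s<l$, $\gamma$ continuously differentiable in $s$ with $\partial_s\gamma$ continuous, and $\gamma\ge\gamma_0>0$. Assume there is $\varepsilon>0$ with $\int_{m-\varepsilon}^m\beta(s,J,A)\,ds>0$ for all $(J,A)\in\mathbb{R}^2_+$. For $(J,A)\in\mathbb{R}^2_+$ define $\Psi_{(J,A)}p=-(\gamma(\cdot,J,A)p)_s-\mu(\cdot,J,A)p$ on $D(\Psi_{(J,A)})=\{p\in W^{1,1}(0,m) : \gamma(0,J,A)p(0)=\int_l^m\beta(s,J,A)p(s)\,ds\}\subset L^1(0,m)$. Assume there exist $0<r<R<\infty$ such that $s(\Psi_{(J,A)})>0$ whenever $J+A\le r$ and $s(\Psi_{(J,A)})<0$ whenever $J+A\ge R$. Then the model $p_t+(\gamma(s,J(t),A(t))p)_s=-\mu(s,J(t),A(t))p$, $\gamma(0,J(t),A(t))p(0,t)=\int_l^m\beta(s,J(t),A(t))p(s,t)\,ds$, with $J(t)=\int_0^lp(s,t)ds$, $A(t)=\int_l^mp(s,t)ds$, admits a positive steady state: there is $p\in D(\Psi_{(J,A)})$, $p\ge0$, $p\neq0$, with $(J,A)=(\int_0^lp,\int_l^mp)$ and $\Psi_{(J,A)}p=0$.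
   Context: $s(T)=\sup\{\operatorname{Re}\lambda:\lambda\in\sigma(T)\}$ denotes the spectral bound of a closed operator $T$. *)

theory Defs
  imports "HOL-Analysis.Analysis"
begin

text \<open>Functions on [0,m] are represented by (complex-valued) representatives
  p :: real \<Rightarrow> complex; L^1(0,m) = absolutely integrable on {0..m},
  equality in L^1 = equality outside a negligible set.\<close>

text \<open>W^{1,1}(0,m): p is absolutely continuous on [0,m], i.e. p is the
  indefinite integral of an L^1 function q (its weak derivative).\<close>
definition W11 :: "real \<Rightarrow> (real \<Rightarrow> complex) \<Rightarrow> bool" where
  "W11 m p \<longleftrightarrow> (\<exists>q. q absolutely_integrable_on {0..m} \<and>
      (\<forall>x\<in>{0..m}. p x = p 0 + integral {0..x} q))"

definition psi_dom ::
  "(real \<Rightarrow> real \<Rightarrow> real \<Rightarrow> real) \<Rightarrow> (real \<Rightarrow> real \<Rightarrow> real \<Rightarrow> real) \<Rightarrow> real \<Rightarrow> real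
   \<Rightarrow> real \<Rightarrow> real \<Rightarrow> (real \<Rightarrow> complex) \<Rightarrow> bool" where
  "psi_dom \<beta> \<gamma> l m J A p \<longleftrightarrow> W11 m p \<and>
     complex_of_real (\<gamma> 0 J A) * p 0 = integral {l..m} (\<lambda>s. complex_of_real (\<beta> s J A) * p s)"

text \<open>Graph of Psi_(J,A): p \<in> D(Psi) and Psi p = f in L^1(0,m), where
  Psi p = -(\<gamma> p)_s - \<mu> p = -(\<gamma>s p + \<gamma> p') - \<mu> p, with \<gamma>s = \<partial>_s \<gamma> and p' the weak derivative.\<close>
definition psi_graph ::
  "(real \<Rightarrow> real \<Rightarrow> real \<Rightarrow> real) \<Rightarrow> (real \<Rightarrow> real \<Rightarrow> real \<Rightarrow> real) \<Rightarrow>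
   (real \<Rightarrow> real \<Rightarrow> real \<Rightarrow> real) \<Rightarrow> (real \<Rightarrow> real \<Rightarrow> real \<Rightarrow> real) \<Rightarrow> real \<Rightarrow> real
   \<Rightarrow> real \<Rightarrow> real \<Rightarrow> (real \<Rightarrow> complex) \<Rightarrow> (real \<Rightarrow> complex) \<Rightarrow> bool" where
  "psi_graph \<beta> \<gamma> \<gamma>s \<mu> l m J A p f \<longleftrightarrow> psi_dom \<beta> \<gamma> l m J A p \<and>
     f absolutely_integrable_on {0..m} \<and>
     (\<exists>q. q absolutely_integrable_on {0..m} \<and>
        (\<forall>x\<in>{0..m}. p x = p 0 + integral {0..x} q) \<and>
        negligible {s\<in>{0..m}. f s \<noteq>
           - (complex_of_real (\<gamma>s s J A) * p s + complex_of_real (\<gamma> s J A) * q s)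
           - complex_of_real (\<mu> s J A) * p s})"

text \<open>Resolvent set: \<lambda> - Psi is onto L^1 and has a bounded inverse
  (bounded below, hence injective).\<close>
definition psi_resolvent ::
  "(real \<Rightarrow> real \<Rightarrow> real \<Rightarrow> real) \<Rightarrow> (real \<Rightarrow> real \<Rightarrow> real \<Rightarrow> real) \<Rightarrow>
   (real \<Rightarrow> real \<Rightarrow> real \<Rightarrow> real) \<Rightarrow> (real \<Rightarrow> real \<Rightarrow> real \<Rightarrow> real) \<Rightarrow> real \<Rightarrow> real
   \<Rightarrow> real \<Rightarrow> real \<Rightarrow> complex \<Rightarrow> bool" where
  "psi_resolvent \<beta> \<gamma> \<gamma>s \<mu> l m J A z \<longleftrightarrow>
     (\<forall>g. g absolutely_integrable_on {0..m} \<longrightarrow>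
        (\<exists>p f. psi_graph \<beta> \<gamma> \<gamma>s \<mu> l m J A p f \<and>
               negligible {s\<in>{0..m}. z * p s - f s \<noteq> g s})) \<and>
     (\<exists>C. \<forall>p f. psi_graph \<beta> \<gamma> \<gamma>s \<mu> l m J A p f \<longrightarrow>
        integral {0..m} (\<lambda>s. norm (p s)) \<le> C * integral {0..m} (\<lambda>s. norm (z * p s - f s)))"

definition psi_spectrum ::
  "(real \<Rightarrow> real \<Rightarrow> real \<Rightarrow> real) \<Rightarrow> (real \<Rightarrow> real \<Rightarrow> real \<Rightarrow> real) \<Rightarrow>
   (real \<Rightarrow> real \<Rightarrow> real \<Rightarrow> real) \<Rightarrow> (real \<Rightarrow> real \<Rightarrow> real \<Rightarrow> real) \<Rightarrow> real \<Rightarrow> real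
   \<Rightarrow> real \<Rightarrow> real \<Rightarrow> complex set" where
  "psi_spectrum \<beta> \<gamma> \<gamma>s \<mu> l m J A = {z. \<not> psi_resolvent \<beta> \<gamma> \<gamma>s \<mu> l m J A z}"

text \<open>Spectral bound s(T) = sup{Re \<lambda> : \<lambda> \<in> \<sigma>(T)} in the extended reals
  (= -\<infinity> for empty spectrum).\<close>
definition psi_spectral_bound ::
  "(real \<Rightarrow> real \<Rightarrow> real \<Rightarrow> real) \<Rightarrow> (real \<Rightarrow> real \<Rightarrow> real \<Rightarrow> real) \<Rightarrow>
   (real \<Rightarrow> real \<Rightarrow> real \<Rightarrow> real) \<Rightarrow> (real \<Rightarrow> real \<Rightarrow> real \<Rightarrow> real) \<Rightarrow> real \<Rightarrow> real
   \<Rightarrow> real \<Rightarrow> real \<Rightarrow> ereal" where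
  "psi_spectral_bound \<beta> \<gamma> \<gamma>s \<mu> l m J A =
     Sup ((\<lambda>z. ereal (Re z)) ` psi_spectrum \<beta> \<gamma> \<gamma>s \<mu> l m J A)"

end

theory Submission
  imports Defs
begin

definition AA :: "(real \<Rightarrow> complex) \<Rightarrow> real \<Rightarrow> complex" where
  "AA a x = integral {0..x} a"

lemma AA_0[simp]: "AA a 0 = 0"
  by (simp add: AA_def)

lemma AA_deriv:
  assumes "continuous_on {0..m} a" "x \<in> {0..m}"
  shows "(AA a has_vector_derivative a x) (at x within {0..m})"
  unfolding AA_def using integral_has_vector_derivative[OF assms] .

lemma expAA_deriv:
  assumes "continuous_on {0..m} a" "x \<in> {0..m}"
  shows "((\<lambda>x. exp (AA a x)) has_vector_derivative a x * exp (AA a x)) (at x within {0..m})"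
proof -
  have "((exp \<circ> AA a) has_vector_derivative a x * exp (AA a x)) (at x within {0..m})"
    by (rule field_vector_diff_chain_within[OF AA_deriv[OF assms]])
       (auto intro: has_field_derivative_at_within DERIV_exp)
  then show ?thesis by (simp add: o_def)
qed

lemma expmAA_deriv:
  assumes "continuous_on {0..m} a" "x \<in> {0..m}"
  shows "((\<lambda>x. exp (- AA a x)) has_vector_derivative - a x * exp (- AA a x)) (at x within {0..m})"
proof -
  have d: "((\<lambda>x. - AA a x) has_vector_derivative - a x) (at x within {0..m})"
    using AA_deriv[OF assms] by (rule has_vector_derivative_minus)
  have "((exp \<circ> (\<lambda>x. - AA a x)) has_vector_derivative - a x * exp (- AA a x)) (at x within {0..m})"
    by (rule field_vector_diff_chain_within[OF d])
       (auto intro: has_field_derivative_at_within DERIV_exp)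
  then show ?thesis by (simp add: o_def)
qed

lemma continuous_on_AA:
  assumes "continuous_on {0..m} a"
  shows "continuous_on {0..m} (AA a)"
  using continuous_on_vector_derivative[of "{0..m}" "AA a" a] AA_deriv[OF assms] by blast

lemma gen_zero:
  fixes a d :: "real \<Rightarrow> complex"
  assumes a: "continuous_on {0..m} a" and d: "continuous_on {0..m} d"
    and eq: "\<And>x. x \<in> {0..m} \<Longrightarrow> d x = integral {0..x} (\<lambda>t. a t * d t)"
    and x: "x \<in> {0..m}"
  shows "d x = 0"
proof -
  define D where "D = (\<lambda>x. integral {0..x} (\<lambda>t. a t * d t))"
  have ad: "continuous_on {0..m} (\<lambda>t. a t * d t)"
    using a d by (intro continuous_intros)
  have Dd: "D y = d y" if "y \<in> {0..m}" for y using eq[OF that] by (simp add: D_def)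
  have D': "(D has_vector_derivative a y * D y) (at y within {0..m})" if "y \<in> {0..m}" for y
    using integral_has_vector_derivative[OF ad that] Dd[OF that] by (simp add: D_def)
  define F where "F = (\<lambda>y. exp (- AA a y) * D y)"
  have F': "(F has_vector_derivative 0) (at y within {0..m})" if "y \<in> {0..m}" for y
  proof -
    have "(F has_vector_derivative (exp (- AA a y) * (a y * D y) + (- a y * exp (- AA a y)) * D y))
       (at y within {0..m})"
      unfolding F_def by (rule has_vector_derivative_mult[OF expmAA_deriv[OF a that] D'[OF that]])
    then show ?thesis by (simp add: algebra_simps)
  qed
  have "((\<lambda>_. 0) has_integral (F x - F 0)) {0..x}"
    apply (rule fundamental_theorem_of_calculus)
    using x apply simp
    apply (rule has_vector_derivative_within_subset[OF F'])
    using x by auto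
  then have "F x - F 0 = 0"
    using has_integral_unique has_integral_0 by blast
  moreover have "F 0 = 0" by (simp add: F_def D_def)
  ultimately have "exp (- AA a x) * D x = 0" by (simp add: F_def)
  then have "D x = 0" by simp
  then show ?thesis using Dd[OF x] by simp
qed


definition solg :: "(real \<Rightarrow> complex) \<Rightarrow> (real \<Rightarrow> complex) \<Rightarrow> complex \<Rightarrow> real \<Rightarrow> complex" where
  "solg a b p0 x = integral {0..x} b +
     exp (AA a x) * (p0 + integral {0..x} (\<lambda>t. exp (- AA a t) * a t * integral {0..t} b))"

lemma solg_0[simp]: "solg a b p0 0 = p0"
  by (simp add: solg_def)

lemma solg_lin: "solg a b p0 x = p0 * exp (AA a x) + solg a b 0 x"
  by (simp add: solg_def algebra_simps)

lemma solg_facts: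
  fixes a b :: "real \<Rightarrow> complex"
  assumes a: "continuous_on {0..m} a" and b: "b integrable_on {0..m}"
  shows "continuous_on {0..m} (solg a b p0)"
    and "\<And>x. x \<in> {0..m} \<Longrightarrow> solg a b p0 x = p0 + integral {0..x} (\<lambda>t. a t * solg a b p0 t + b t)"
proof -
  define B where "B = (\<lambda>x. integral {0..x} b)"
  have Bc: "continuous_on {0..m} B" unfolding B_def by (rule indefinite_integral_continuous_1[OF b])
  have AAc: "continuous_on {0..m} (AA a)" by (rule continuous_on_AA[OF a])
  define h where "h = (\<lambda>t. exp (- AA a t) * a t * B t)"
  have hc: "continuous_on {0..m} h" unfolding h_def using a Bc AAc by (intro continuous_intros)
  define w where "w = (\<lambda>x. exp (AA a x) * (p0 + integral {0..x} h))"
  have sw: "solg a b p0 = (\<lambda>x. B x + w x)" by (simp add: solg_def fun_eq_iff B_def w_def h_def)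
  have w': "(w has_vector_derivative a y * B y + a y * w y) (at y within {0..m})" if y: "y \<in> {0..m}" for y
  proof -
    have "(w has_vector_derivative (exp (AA a y) * h y + (a y * exp (AA a y)) * (p0 + integral {0..y} h)))
        (at y within {0..m})"
      unfolding w_def
      using has_vector_derivative_add[OF has_vector_derivative_const integral_has_vector_derivative[OF hc y]]
      by (intro has_vector_derivative_mult expAA_deriv[OF a y]) simp
    moreover have "exp (AA a y) * h y = a y * B y"
    proof -
      have e: "exp (AA a y) * exp (- AA a y) = 1" by (rule exp_minus_inverse)
      show ?thesis unfolding h_def by (metis e mult.assoc mult_1_left)
    qed
    ultimately show ?thesis unfolding w_def by (simp add: distrib_left distrib_right mult.assoc)
  qed
  have wc: "continuous_on {0..m} w" by (rule continuous_on_vector_derivative, rule w')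
  show sc: "continuous_on {0..m} (solg a b p0)" unfolding sw using Bc wc by (intro continuous_intros)
  fix x assume x: "x \<in> {0..m}"
  have "((\<lambda>t. a t * B t + a t * w t) has_integral (w x - w 0)) {0..x}"
    apply (rule fundamental_theorem_of_calculus)
    using x apply simp
    apply (rule has_vector_derivative_within_subset[OF w'])
    using x by auto
  moreover have "w 0 = p0" by (simp add: w_def)
  ultimately have I1: "integral {0..x} (\<lambda>t. a t * B t + a t * w t) = w x - p0"
    by (simp add: integral_unique)
  have sub: "{0..x} \<subseteq> {0..m}" using x by auto
  have i1: "(\<lambda>t. a t * solg a b p0 t) integrable_on {0..x}"
    by (rule integrable_continuous_interval, rule continuous_on_subset[OF _ sub]) (intro continuous_intros a sc)
  have i2: "b integrable_on {0..x}" using integrable_on_subinterval[OF b sub] .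
  have "integral {0..x} (\<lambda>t. a t * solg a b p0 t + b t) = integral {0..x} (\<lambda>t. a t * solg a b p0 t) + B x"
    using integral_add[OF i1 i2] by (simp add: B_def)
  also have "integral {0..x} (\<lambda>t. a t * solg a b p0 t) = integral {0..x} (\<lambda>t. a t * B t + a t * w t)"
    by (simp add: sw distrib_left)
  finally show "solg a b p0 x = p0 + integral {0..x} (\<lambda>t. a t * solg a b p0 t + b t)"
    using I1 by (simp add: sw)
qed

lemma solg_unique:
  fixes a b p :: "real \<Rightarrow> complex"
  assumes a: "continuous_on {0..m} a" and b: "b integrable_on {0..m}"
    and p: "continuous_on {0..m} p"
    and eq: "\<And>x. x \<in> {0..m} \<Longrightarrow> p x = p 0 + integral {0..x} (\<lambda>t. a t * p t + b t)"
    and x: "x \<in> {0..m}"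
  shows "p x = solg a b (p 0) x"
proof -
  define S where "S = solg a b (p 0)"
  have Sc: "continuous_on {0..m} S" unfolding S_def by (rule solg_facts(1)[OF a b])
  have Seq: "\<And>x. x \<in> {0..m} \<Longrightarrow> S x = p 0 + integral {0..x} (\<lambda>t. a t * S t + b t)"
    unfolding S_def by (rule solg_facts(2)[OF a b])
  have "(\<lambda>y. p y - S y) y = 0" if y: "y \<in> {0..m}" for y
  proof (rule gen_zero[OF a _ _ y])
    show "continuous_on {0..m} (\<lambda>y. p y - S y)" using p Sc by (intro continuous_intros)
    fix x assume x: "x \<in> {0..m}"
    have sub: "{0..x} \<subseteq> {0..m}" using x by auto
    have i2: "b integrable_on {0..x}" using integrable_on_subinterval[OF b sub] .
    have i1: "(\<lambda>t. a t * p t + b t) integrable_on {0..x}"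
      by (intro integrable_add i2 integrable_continuous_interval continuous_on_subset[OF _ sub] continuous_intros a p)
    have i3: "(\<lambda>t. a t * S t + b t) integrable_on {0..x}"
      by (intro integrable_add i2 integrable_continuous_interval continuous_on_subset[OF _ sub] continuous_intros a Sc)
    have "p x - S x = integral {0..x} (\<lambda>t. a t * p t + b t) - integral {0..x} (\<lambda>t. a t * S t + b t)"
      using eq[OF x] Seq[OF x] by simp
    also have "\<dots> = integral {0..x} (\<lambda>t. (a t * p t + b t) - (a t * S t + b t))"
      using integral_diff[OF i1 i3] by simp
    also have "\<dots> = integral {0..x} (\<lambda>t. a t * (p t - S t))"
      by (simp add: algebra_simps)
    finally show "p x - S x = integral {0..x} (\<lambda>t. a t * (p t - S t))" .
  qed
  from this[OF x] show ?thesis by (simp add: S_def)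
qed

lemma norm_integral_le_m:
  fixes b :: "real \<Rightarrow> complex"
  assumes b: "b absolutely_integrable_on {0..m}" and x: "x \<in> {0..m}"
  shows "norm (integral {0..x} b) \<le> integral {0..m} (\<lambda>t. norm (b t))"
proof -
  have sub: "{0..x} \<subseteq> {0..m}" using x by auto
  have bi: "b integrable_on {0..m}" "(\<lambda>t. norm (b t)) integrable_on {0..m}"
    using b absolutely_integrable_on_def by blast+
  have "norm (integral {0..x} b) \<le> integral {0..x} (\<lambda>t. norm (b t))"
    by (rule integral_norm_bound_integral) (use integrable_on_subinterval[OF _ sub] bi in auto)
  also have "\<dots> \<le> integral {0..m} (\<lambda>t. norm (b t))"
    by (rule integral_subset_le[OF sub]) (use integrable_on_subinterval[OF _ sub] bi in auto)
  finally show ?thesis .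
qed

lemma bound_continuous:
  fixes a :: "real \<Rightarrow> 'b::real_normed_vector"
  assumes "continuous_on {c..d} a"
  obtains B where "B \<ge> 0" "\<And>t. t \<in> {c..d} \<Longrightarrow> norm (a t) \<le> B"
proof -
  have "bounded (a ` {c..d})"
    by (rule compact_imp_bounded[OF compact_continuous_image[OF assms compact_Icc]])
  then obtain B where "B > 0" "\<And>y. y \<in> a ` {c..d} \<Longrightarrow> norm y \<le> B"
    using bounded_pos by metis
  then show ?thesis using that[of B] by auto
qed

lemma solg_bound:
  fixes a :: "real \<Rightarrow> complex"
  assumes a: "continuous_on {0..m} a" and m: "0 \<le> m"
  obtains C M where "C \<ge> 0" "M \<ge> 0" "\<And>x. x \<in> {0..m} \<Longrightarrow> norm (exp (AA a x)) \<le> M"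
    "\<And>x b. b absolutely_integrable_on {0..m} \<Longrightarrow> x \<in> {0..m} \<Longrightarrow>
        norm (solg a b 0 x) \<le> C * integral {0..m} (\<lambda>t. norm (b t))"
proof -
  obtain Ma where Ma: "Ma \<ge> 0" "\<And>t. t \<in> {0..m} \<Longrightarrow> norm (a t) \<le> Ma"
    using bound_continuous[OF a] by metis
  define M where "M = exp (Ma * m)"
  have M0: "M \<ge> 0" by (simp add: M_def)
  have AAb: "norm (AA a x) \<le> Ma * m" if x: "x \<in> {0..m}" for x
  proof -
    have sub: "{0..x} \<subseteq> {0..m}" using x by auto
    have "norm (AA a x) \<le> integral {0..x} (\<lambda>_. Ma)"
      unfolding AA_def
      by (rule integral_norm_bound_integral)
         (use Ma sub integrable_continuous_interval[OF continuous_on_subset[OF a sub]] in auto)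
    also have "\<dots> = x * Ma" using x by simp
    also have "\<dots> \<le> m * Ma" using x Ma by (intro mult_right_mono) auto
    finally show ?thesis by (simp add: mult.commute)
  qed
  have E1: "norm (exp (AA a x)) \<le> M" if "x \<in> {0..m}" for x
    using norm_exp[of "AA a x"] AAb[OF that] unfolding M_def by (meson exp_le_cancel_iff order_trans)
  have E2: "norm (exp (- AA a x)) \<le> M" if "x \<in> {0..m}" for x
    using norm_exp[of "- AA a x"] AAb[OF that] unfolding M_def by (metis norm_minus_cancel exp_le_cancel_iff order_trans)
  define C where "C = 1 + M * (m * (M * Ma))"
  have C0: "C \<ge> 0" unfolding C_def using M0 Ma m by simp
  show ?thesis
  proof (rule that[OF C0 M0 E1])
    fix x and b :: "real \<Rightarrow> complex"
    assume b: "b absolutely_integrable_on {0..m}" and x: "x \<in> {0..m}"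
    define N where "N = integral {0..m} (\<lambda>t. norm (b t))"
    have sub: "{0..x} \<subseteq> {0..m}" using x by auto
    have bi: "b integrable_on {0..m}" using b absolutely_integrable_on_def by blast
    have Bb: "norm (integral {0..t} b) \<le> N" if "t \<in> {0..m}" for t
      using norm_integral_le_m[OF b that] by (simp add: N_def)
    have N0: "N \<ge> 0" using Bb[of 0] m by (smt (verit) atLeastAtMost_iff norm_ge_zero)
    have Bc: "continuous_on {0..m} (\<lambda>x. integral {0..x} b)" by (rule indefinite_integral_continuous_1[OF bi])
    have hc: "continuous_on {0..m} (\<lambda>t. exp (- AA a t) * a t * integral {0..t} b)"
      using Bc continuous_on_AA[OF a] a by (intro continuous_intros)
    have hb: "norm (exp (- AA a t) * a t * integral {0..t} b) \<le> M * Ma * N" if "t \<in> {0..m}" for t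
    proof -
      have "norm (exp (- AA a t) * a t * integral {0..t} b) =
          norm (exp (- AA a t)) * norm (a t) * norm (integral {0..t} b)"
        by (simp add: norm_mult)
      also have "\<dots> \<le> M * Ma * N"
        using E2[OF that] Ma(2)[OF that] Bb[OF that] M0 Ma(1) N0
        by (intro mult_mono) auto
      finally show ?thesis .
    qed
    have "norm (integral {0..x} (\<lambda>t. exp (- AA a t) * a t * integral {0..t} b)) \<le> integral {0..x} (\<lambda>_. M * Ma * N)"
      by (rule integral_norm_bound_integral)
         (use hb sub integrable_continuous_interval[OF continuous_on_subset[OF hc sub]] in auto)
    also have "\<dots> = x * (M * Ma * N)" using x by simp
    also have "\<dots> \<le> m * (M * Ma * N)" using x M0 Ma N0 by (intro mult_right_mono) auto
    finally have Ib: "norm (integral {0..x} (\<lambda>t. exp (- AA a t) * a t * integral {0..t} b)) \<le> m * (M * Ma * N)" .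
    have "norm (solg a b 0 x) = norm (integral {0..x} b +
        exp (AA a x) * integral {0..x} (\<lambda>t. exp (- AA a t) * a t * integral {0..t} b))"
      unfolding solg_def by (simp only: add_0)
    also have "\<dots> \<le> norm (integral {0..x} b) +
        norm (exp (AA a x) * integral {0..x} (\<lambda>t. exp (- AA a t) * a t * integral {0..t} b))"
      by (rule norm_triangle_ineq)
    also have "\<dots> = norm (integral {0..x} b) +
        norm (exp (AA a x)) * norm (integral {0..x} (\<lambda>t. exp (- AA a t) * a t * integral {0..t} b))"
      by (simp only: norm_mult)
    also have "\<dots> \<le> N + M * (m * (M * Ma * N))"
      using Bb[OF x] E1[OF x] Ib M0 by (intro add_mono mult_mono) auto
    also have "\<dots> = C * N" by (simp add: C_def algebra_simps)
    finally show "norm (solg a b 0 x) \<le> C * integral {0..m} (\<lambda>t. norm (b t))" by (simp add: N_def)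
  qed
qed

lemma cont_slice:
  assumes "continuous_on ({0..m} \<times> ({0..} \<times> {0..})) (\<lambda>(s, J, A). f s J A)"
    and "0 \<le> J" "0 \<le> A"
  shows "continuous_on {0..m} (\<lambda>s. f s J A)"
proof -
  have "continuous_on {0..m} ((\<lambda>(s, J, A). f s J A) \<circ> (\<lambda>s. (s, J, A)))"
    by (rule continuous_on_compose[OF _ continuous_on_subset[OF assms(1)]])
       (use assms in \<open>auto intro!: continuous_intros\<close>)
  then show ?thesis by (simp add: o_def)
qed

locale model =
  fixes \<beta> \<gamma> \<gamma>s \<mu> :: "real \<Rightarrow> real \<Rightarrow> real \<Rightarrow> real"
    and l m \<gamma>0 :: real
  assumes lm: "0 < l" "l < m"
    and cont_\<beta>: "continuous_on ({0..m} \<times> ({0..} \<times> {0..})) (\<lambda>(s, J, A). \<beta> s J A)"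
    and cont_\<gamma>: "continuous_on ({0..m} \<times> ({0..} \<times> {0..})) (\<lambda>(s, J, A). \<gamma> s J A)"
    and cont_\<mu>: "continuous_on ({0..m} \<times> ({0..} \<times> {0..})) (\<lambda>(s, J, A). \<mu> s J A)"
    and nonneg: "\<And>s J A. s \<in> {0..m} \<Longrightarrow> 0 \<le> J \<Longrightarrow> 0 \<le> A \<Longrightarrow>
                   0 \<le> \<beta> s J A \<and> 0 \<le> \<gamma> s J A \<and> 0 \<le> \<mu> s J A"
    and \<beta>_zero: "\<And>s J A. s \<in> {0..<l} \<Longrightarrow> 0 \<le> J \<Longrightarrow> 0 \<le> A \<Longrightarrow> \<beta> s J A = 0"
    and cont_\<gamma>s: "continuous_on ({0..m} \<times> ({0..} \<times> {0..})) (\<lambda>(s, J, A). \<gamma>s s J A)"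
    and \<gamma>0: "0 < \<gamma>0" "\<And>s J A. s \<in> {0..m} \<Longrightarrow> 0 \<le> J \<Longrightarrow> 0 \<le> A \<Longrightarrow> \<gamma>0 \<le> \<gamma> s J A"
begin

definition az :: "real \<Rightarrow> real \<Rightarrow> complex \<Rightarrow> real \<Rightarrow> complex" where
  "az J A z t = - (of_real (\<gamma>s t J A + \<mu> t J A) + z) / of_real (\<gamma> t J A)"

definition bz :: "real \<Rightarrow> real \<Rightarrow> (real \<Rightarrow> complex) \<Rightarrow> real \<Rightarrow> complex" where
  "bz J A g t = g t / of_real (\<gamma> t J A)"

lemma m_pos: "0 < m" using lm by simp

lemma \<gamma>_pos: "s \<in> {0..m} \<Longrightarrow> 0 \<le> J \<Longrightarrow> 0 \<le> A \<Longrightarrow> 0 < \<gamma> s J A"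
  using \<gamma>0 by (meson less_le_trans)

lemma \<gamma>_ne: "s \<in> {0..m} \<Longrightarrow> 0 \<le> J \<Longrightarrow> 0 \<le> A \<Longrightarrow> \<gamma> s J A \<noteq> 0"
  using \<gamma>_pos by force

lemma conts:
  assumes "0 \<le> J" "0 \<le> A"
  shows "continuous_on {0..m} (\<lambda>s. \<beta> s J A)" "continuous_on {0..m} (\<lambda>s. \<gamma> s J A)"
    "continuous_on {0..m} (\<lambda>s. \<mu> s J A)" "continuous_on {0..m} (\<lambda>s. \<gamma>s s J A)"
  using cont_slice[OF cont_\<beta> assms] cont_slice[OF cont_\<gamma> assms]
    cont_slice[OF cont_\<mu> assms] cont_slice[OF cont_\<gamma>s assms] by auto

lemma az_cont:
  assumes "0 \<le> J" "0 \<le> A"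
  shows "continuous_on {0..m} (az J A z)"
  unfolding az_def
  using conts[OF assms]
  by (intro continuous_intros) (auto simp: \<gamma>_ne assms)

lemma bz_absint:
  assumes J: "0 \<le> J" "0 \<le> A" and g: "g absolutely_integrable_on {0..m}"
  shows "bz J A g absolutely_integrable_on {0..m}"
proof -
  have c: "continuous_on {0..m} (\<lambda>t. inverse (complex_of_real (\<gamma> t J A)))"
    using conts[OF J] by (intro continuous_intros) (auto simp: \<gamma>_ne J)
  obtain B where "B \<ge> 0" "\<And>t. t \<in> {0..m} \<Longrightarrow> norm (inverse (complex_of_real (\<gamma> t J A))) \<le> B"
    using bound_continuous[OF c] by metis
  then have bd: "bounded ((\<lambda>t. inverse (complex_of_real (\<gamma> t J A))) ` {0..m})"
    unfolding bounded_iff by (intro exI[of _ B]) auto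
  have "(\<lambda>t. inverse (complex_of_real (\<gamma> t J A)) * g t) absolutely_integrable_on {0..m}"
    by (rule absolutely_integrable_bounded_measurable_product[OF bilinear_times
          continuous_imp_measurable_on_sets_lebesgue[OF c] _ bd g]) auto
  then show ?thesis unfolding bz_def by (simp add: divide_inverse_commute)
qed

lemma bz_norm:
  assumes J: "0 \<le> J" "0 \<le> A" and g: "g absolutely_integrable_on {0..m}"
  shows "integral {0..m} (\<lambda>t. norm (bz J A g t)) \<le> integral {0..m} (\<lambda>t. norm (g t)) / \<gamma>0"
proof -
  have i1: "(\<lambda>t. norm (bz J A g t)) integrable_on {0..m}"
    using bz_absint[OF J g] absolutely_integrable_on_def by blast
  have i2: "(\<lambda>t. norm (g t) / \<gamma>0) integrable_on {0..m}"
    using g absolutely_integrable_on_def integrable_on_divide by blast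
  have "integral {0..m} (\<lambda>t. norm (bz J A g t)) \<le> integral {0..m} (\<lambda>t. norm (g t) / \<gamma>0)"
  proof (rule integral_le[OF i1 i2])
    fix t assume t: "t \<in> {0..m}"
    have "norm (bz J A g t) = norm (g t) / \<gamma> t J A"
      unfolding bz_def using \<gamma>_pos[OF t J] by (simp add: norm_divide)
    also have "\<dots> \<le> norm (g t) / \<gamma>0"
      using \<gamma>0(1) \<gamma>0(2)[OF t J] by (intro divide_left_mono) auto
    finally show "norm (bz J A g t) \<le> norm (g t) / \<gamma>0" .
  qed
  also have "\<dots> = integral {0..m} (\<lambda>t. norm (g t)) / \<gamma>0"
    by (simp add: divide_inverse integral_mult_left)
  finally show ?thesis .
qed

lemma graph_construct:
  assumes J: "0 \<le> J" "0 \<le> A" and g: "g absolutely_integrable_on {0..m}"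
    and peq: "\<And>x. x \<in> {0..m} \<Longrightarrow> p x = solg (az J A z) (bz J A g) p0 x"
    and bc: "complex_of_real (\<gamma> 0 J A) * p0 = integral {l..m} (\<lambda>s. complex_of_real (\<beta> s J A) * p s)"
  shows "psi_graph \<beta> \<gamma> \<gamma>s \<mu> l m J A p (\<lambda>s. z * p s - g s)"
proof -
  define a where "a = az J A z"
  define b where "b = bz J A g"
  have ac: "continuous_on {0..m} a" unfolding a_def by (rule az_cont[OF J])
  have bai: "b absolutely_integrable_on {0..m}" unfolding b_def by (rule bz_absint[OF J g])
  then have bi: "b integrable_on {0..m}" using absolutely_integrable_on_def by blast
  have Sc: "continuous_on {0..m} (solg a b p0)" by (rule solg_facts(1)[OF ac bi])
  have pc: "continuous_on {0..m} p"
    by (rule continuous_on_eq[OF Sc]) (use peq in \<open>auto simp: a_def b_def\<close>)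
  have p0: "p 0 = p0" using peq[of 0] m_pos by simp
  define q where "q = (\<lambda>t. a t * p t + b t)"
  have qi: "q absolutely_integrable_on {0..m}"
    unfolding q_def
    by (intro set_integral_add(1) bai absolutely_integrable_continuous_real continuous_intros ac pc)
  have qeq: "p x = p 0 + integral {0..x} q" if x: "x \<in> {0..m}" for x
  proof -
    have "p x = p0 + integral {0..x} (\<lambda>t. a t * solg a b p0 t + b t)"
      using solg_facts(2)[OF ac bi x] peq[OF x] by (simp add: a_def b_def)
    also have "integral {0..x} (\<lambda>t. a t * solg a b p0 t + b t) = integral {0..x} q"
      unfolding q_def by (rule integral_cong) (use x peq in \<open>auto simp: a_def b_def\<close>)
    finally show ?thesis using p0 by simp
  qed
  have W: "W11 m p" unfolding W11_def using qi qeq by blast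
  have fi: "(\<lambda>s. z * p s - g s) absolutely_integrable_on {0..m}"
    by (intro set_integral_diff(1) g absolutely_integrable_continuous_real continuous_intros pc)
  have pt: "z * p s - g s = - (complex_of_real (\<gamma>s s J A) * p s + complex_of_real (\<gamma> s J A) * q s)
           - complex_of_real (\<mu> s J A) * p s" if s: "s \<in> {0..m}" for s
  proof -
    have ne: "complex_of_real (\<gamma> s J A) \<noteq> 0" using \<gamma>_pos[OF s J] by simp
    have "complex_of_real (\<gamma> s J A) * q s = - (of_real (\<gamma>s s J A + \<mu> s J A) + z) * p s + g s"
      unfolding q_def a_def b_def az_def bz_def using ne by (simp add: field_simps)
    then show ?thesis by (simp add: algebra_simps)
  qed
  have neg: "negligible {s\<in>{0..m}. z * p s - g s \<noteq>
           - (complex_of_real (\<gamma>s s J A) * p s + complex_of_real (\<gamma> s J A) * q s)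
           - complex_of_real (\<mu> s J A) * p s}"
  proof -
    have "{s\<in>{0..m}. z * p s - g s \<noteq>
           - (complex_of_real (\<gamma>s s J A) * p s + complex_of_real (\<gamma> s J A) * q s)
           - complex_of_real (\<mu> s J A) * p s} = {}" using pt by blast
    then show ?thesis by (simp only: negligible_empty)
  qed
  show ?thesis
    unfolding psi_graph_def psi_dom_def
    using W bc p0 fi qi qeq neg by blast
qed

lemma graph_unique:
  assumes J: "0 \<le> J" "0 \<le> A" and G: "psi_graph \<beta> \<gamma> \<gamma>s \<mu> l m J A p f"
  shows "continuous_on {0..m} p" "(\<lambda>s. z * p s - f s) absolutely_integrable_on {0..m}"
    "\<And>x. x \<in> {0..m} \<Longrightarrow> p x = solg (az J A z) (bz J A (\<lambda>s. z * p s - f s)) (p 0) x"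
proof -
  from G obtain q where fi: "f absolutely_integrable_on {0..m}"
    and qi: "q absolutely_integrable_on {0..m}"
    and qeq: "\<And>x. x\<in>{0..m} \<Longrightarrow> p x = p 0 + integral {0..x} q"
    and neg: "negligible {s\<in>{0..m}. f s \<noteq>
           - (complex_of_real (\<gamma>s s J A) * p s + complex_of_real (\<gamma> s J A) * q s)
           - complex_of_real (\<mu> s J A) * p s}"
    unfolding psi_graph_def by blast
  have qint: "q integrable_on {0..m}" using qi absolutely_integrable_on_def by blast
  show pc: "continuous_on {0..m} p"
  proof (rule continuous_on_eq[of _ "\<lambda>x. p 0 + integral {0..x} q"])
    show "continuous_on {0..m} (\<lambda>x. p 0 + integral {0..x} q)"
      by (intro continuous_intros indefinite_integral_continuous_1[OF qint])
    show "\<And>x. x \<in> {0..m} \<Longrightarrow> p 0 + integral {0..x} q = p x" using qeq by metis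
  qed
  define g where "g = (\<lambda>s. z * p s - f s)"
  show gi: "(\<lambda>s. z * p s - f s) absolutely_integrable_on {0..m}"
    by (intro set_integral_diff(1) fi absolutely_integrable_continuous_real continuous_intros pc)
  define a where "a = az J A z"
  define b where "b = bz J A g"
  have ac: "continuous_on {0..m} a" unfolding a_def by (rule az_cont[OF J])
  have bai: "b absolutely_integrable_on {0..m}" unfolding b_def g_def by (rule bz_absint[OF J gi])
  then have bi: "b integrable_on {0..m}" using absolutely_integrable_on_def by blast
  define N where "N = {s\<in>{0..m}. f s \<noteq>
           - (complex_of_real (\<gamma>s s J A) * p s + complex_of_real (\<gamma> s J A) * q s)
           - complex_of_real (\<mu> s J A) * p s}"
  have qa: "q t = a t * p t + b t" if t: "t \<in> {0..m} - N" for t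
  proof -
    have tm: "t \<in> {0..m}" and ft: "f t = - (complex_of_real (\<gamma>s t J A) * p t + complex_of_real (\<gamma> t J A) * q t)
           - complex_of_real (\<mu> t J A) * p t" using t by (auto simp: N_def)
    have ne: "complex_of_real (\<gamma> t J A) \<noteq> 0" using \<gamma>_pos[OF tm J] by simp
    have e1: "complex_of_real (\<gamma> t J A) * q t = - f t - (of_real (\<gamma>s t J A) + of_real (\<mu> t J A)) * p t"
      by (simp add: ft algebra_simps)
    have e2: "a t * p t + b t = (- f t - (of_real (\<gamma>s t J A) + of_real (\<mu> t J A)) * p t) / complex_of_real (\<gamma> t J A)"
      unfolding a_def b_def az_def bz_def g_def using ne by (simp add: field_simps)
    have "q t = (complex_of_real (\<gamma> t J A) * q t) / complex_of_real (\<gamma> t J A)" using ne by simp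
    then show ?thesis by (metis e1 e2)
  qed
  have eq: "p x = p 0 + integral {0..x} (\<lambda>t. a t * p t + b t)" if x: "x \<in> {0..m}" for x
  proof -
    have "integral {0..x} q = integral {0..x} (\<lambda>t. a t * p t + b t)"
    proof (rule integral_spike[of N])
      show "negligible N" using neg unfolding N_def .
      fix y assume "y \<in> {0..x} - N"
      then have "y \<in> {0..m} - N" using x by auto
      then show "a y * p y + b y = q y" using qa by metis
    qed
    then show ?thesis using qeq[OF x] by metis
  qed
  fix x assume x: "x \<in> {0..m}"
  show "p x = solg (az J A z) (bz J A (\<lambda>s. z * p s - f s)) (p 0) x"
    using solg_unique[OF ac bi pc eq x] by (simp add: a_def b_def g_def)
qed

end

lemma integral_pos_cont:
  fixes f :: "real \<Rightarrow> real"
  assumes ab: "a < b" and c: "continuous_on {a..b} f" and pos: "\<And>x. x \<in> {a..b} \<Longrightarrow> 0 < f x"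
  shows "0 < integral {a..b} f"
proof -
  obtain x0 where x0: "x0 \<in> {a..b}" "\<And>y. y \<in> {a..b} \<Longrightarrow> f x0 \<le> f y"
    using continuous_attains_inf[OF compact_Icc _ c] ab by auto
  have "integral {a..b} (\<lambda>_. f x0) \<le> integral {a..b} f"
    by (rule integral_le) (use x0 integrable_continuous_interval[OF c] in auto)
  moreover have "integral {a..b} (\<lambda>_. f x0) = (b - a) * f x0" using ab by simp
  moreover have "0 < (b - a) * f x0" using ab pos[OF x0(1)] by simp
  ultimately show ?thesis by linarith
qed

lemma cont_snd:
  assumes "continuous_on S f"
  shows "continuous_on (U \<times> S) (\<lambda>x. f (snd x))"
  by (rule continuous_on_compose2[OF assms continuous_on_snd]) auto

context model
begin

definition Ti :: "real \<Rightarrow> real \<Rightarrow> real \<Rightarrow> real \<Rightarrow> real" where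
  "Ti J A c s = integral {0..s} (\<lambda>t. (\<gamma>s t J A + \<mu> t J A + c) / \<gamma> t J A)"

definition Er :: "real \<Rightarrow> real \<Rightarrow> real \<Rightarrow> real \<Rightarrow> real" where
  "Er J A c s = exp (- Ti J A c s)"

definition Rr :: "real \<Rightarrow> real \<Rightarrow> real \<Rightarrow> real" where
  "Rr J A c = integral {l..m} (\<lambda>s. \<beta> s J A * Er J A c s)"

definition Rc :: "real \<Rightarrow> real \<Rightarrow> complex \<Rightarrow> complex" where
  "Rc J A z = integral {l..m} (\<lambda>s. complex_of_real (\<beta> s J A) * exp (AA (az J A z) s))"

lemma lm_sub: "{l..m} \<subseteq> {0..m}" using lm by auto

lemma k_cont:
  assumes J: "0 \<le> J" "0 \<le> A"
  shows "continuous_on {0..m} (\<lambda>t. (\<gamma>s t J A + \<mu> t J A + c) / \<gamma> t J A)"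
  using conts[OF J] by (intro continuous_intros) (auto simp: \<gamma>_ne J)

lemma Ti_cont:
  assumes J: "0 \<le> J" "0 \<le> A"
  shows "continuous_on {0..m} (Ti J A c)"
  unfolding Ti_def[abs_def]
  by (rule indefinite_integral_continuous_1[OF integrable_continuous_interval[OF k_cont[OF J]]])

lemma Er_cont:
  assumes J: "0 \<le> J" "0 \<le> A"
  shows "continuous_on {0..m} (Er J A c)"
  unfolding Er_def[abs_def] using Ti_cont[OF J] by (intro continuous_intros)

lemma Er_pos: "0 < Er J A c s" by (simp add: Er_def)

lemma AA_real:
  assumes J: "0 \<le> J" "0 \<le> A" and s: "s \<in> {0..m}"
  shows "exp (AA (az J A (complex_of_real c)) s) = complex_of_real (Er J A c s)"
proof -
  have sub: "{0..s} \<subseteq> {0..m}" using s by auto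
  have e: "az J A (complex_of_real c) t = complex_of_real (- ((\<gamma>s t J A + \<mu> t J A + c) / \<gamma> t J A))" for t
    by (simp add: az_def minus_divide_left)
  have i: "(\<lambda>t. (\<gamma>s t J A + \<mu> t J A + c) / \<gamma> t J A) integrable_on {0..s}"
    by (rule integrable_continuous_interval[OF continuous_on_subset[OF k_cont[OF J] sub]])
  have "AA (az J A (complex_of_real c)) s = integral {0..s} (complex_of_real \<circ> (\<lambda>t. - ((\<gamma>s t J A + \<mu> t J A + c) / \<gamma> t J A)))"
  proof -
    have e': "az J A (complex_of_real c) = complex_of_real \<circ> (\<lambda>t. - ((\<gamma>s t J A + \<mu> t J A + c) / \<gamma> t J A))"
      by (rule ext) (simp only: o_def e)
    show ?thesis by (simp only: AA_def e')
  qed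
  also have "\<dots> = complex_of_real (integral {0..s} (\<lambda>t. - ((\<gamma>s t J A + \<mu> t J A + c) / \<gamma> t J A)))"
    by (rule integral_linear[OF integrable_neg[OF i] bounded_linear_of_real])
  also have "\<dots> = complex_of_real (- Ti J A c s)"
    by (simp add: Ti_def)
  finally show ?thesis by (simp add: Er_def flip: exp_of_real)
qed

lemma Phi_le:
  assumes J: "0 \<le> J" "0 \<le> A" and s: "s \<in> {0..m}" and z: "0 \<le> Re z"
  shows "norm (exp (AA (az J A z) s)) \<le> Er J A 0 s"
proof -
  have sub: "{0..s} \<subseteq> {0..m}" using s by auto
  have ai: "az J A z integrable_on {0..s}"
    by (rule integrable_continuous_interval[OF continuous_on_subset[OF az_cont[OF J] sub]])
  have ki0: "(\<lambda>t. ((\<gamma>s t J A + \<mu> t J A + 0) / \<gamma> t J A)) integrable_on {0..s}"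
    by (rule integrable_continuous_interval[OF continuous_on_subset[OF k_cont[OF J] sub]])
  have ki: "(\<lambda>t. - ((\<gamma>s t J A + \<mu> t J A + 0) / \<gamma> t J A)) integrable_on {0..s}"
    by (rule integrable_neg[OF ki0])
  have "Re (AA (az J A z) s) = integral {0..s} (Re \<circ> az J A z)"
    unfolding AA_def by (rule integral_linear[OF ai bounded_linear_Re, symmetric])
  also have "\<dots> \<le> integral {0..s} (\<lambda>t. - ((\<gamma>s t J A + \<mu> t J A + 0) / \<gamma> t J A))"
  proof (rule integral_le)
    show "(Re \<circ> az J A z) integrable_on {0..s}" using integrable_linear[OF ai bounded_linear_Re] .
    show "(\<lambda>t. - ((\<gamma>s t J A + \<mu> t J A + 0) / \<gamma> t J A)) integrable_on {0..s}" by (rule ki)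
    fix t assume t: "t \<in> {0..s}"
    then have tm: "t \<in> {0..m}" using sub by auto
    have gp: "0 < \<gamma> t J A" by (rule \<gamma>_pos[OF tm J])
    have "(Re \<circ> az J A z) t = - ((\<gamma>s t J A + \<mu> t J A + Re z) / \<gamma> t J A)"
      unfolding az_def o_def by (simp add: Re_divide_of_real minus_divide_left)
    also have "\<dots> \<le> - ((\<gamma>s t J A + \<mu> t J A + 0) / \<gamma> t J A)"
      using z gp by (simp add: divide_right_mono)
    finally show "(Re \<circ> az J A z) t \<le> - ((\<gamma>s t J A + \<mu> t J A + 0) / \<gamma> t J A)" .
  qed
  also have "\<dots> = - Ti J A 0 s" unfolding Ti_def by (rule integral_neg)
  finally show ?thesis by (simp add: Er_def)
qed

lemma Rc_le:
  assumes J: "0 \<le> J" "0 \<le> A" and z: "0 \<le> Re z"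
  shows "norm (Rc J A z) \<le> Rr J A 0"
  unfolding Rc_def Rr_def
proof (rule integral_norm_bound_integral)
  show "(\<lambda>s. complex_of_real (\<beta> s J A) * exp (AA (az J A z) s)) integrable_on {l..m}"
    by (rule integrable_continuous_interval, rule continuous_on_subset[OF _ lm_sub])
       (intro continuous_intros conts[OF J] continuous_on_AA az_cont[OF J])
  show "(\<lambda>s. \<beta> s J A * Er J A 0 s) integrable_on {l..m}"
    by (rule integrable_continuous_interval, rule continuous_on_subset[OF _ lm_sub])
       (intro continuous_intros conts[OF J] Er_cont[OF J])
  fix s assume s: "s \<in> {l..m}"
  then have sm: "s \<in> {0..m}" using lm_sub by auto
  have b0: "0 \<le> \<beta> s J A" using nonneg[OF sm J] by simp
  show "norm (complex_of_real (\<beta> s J A) * exp (AA (az J A z) s)) \<le> \<beta> s J A * Er J A 0 s"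
    unfolding norm_mult using Phi_le[OF J sm z] b0 by (simp add: mult_left_mono)
qed

end

context model
begin

lemma \<beta>_int_bound:
  assumes J: "0 \<le> J" "0 \<le> A" and Pc: "continuous_on {0..m} P"
    and PK: "\<And>x. x \<in> {0..m} \<Longrightarrow> norm (P x) \<le> K"
  shows "norm (integral {l..m} (\<lambda>s. complex_of_real (\<beta> s J A) * P s)) \<le> integral {l..m} (\<lambda>s. \<beta> s J A) * K"
proof -
  have "norm (integral {l..m} (\<lambda>s. complex_of_real (\<beta> s J A) * P s)) \<le> integral {l..m} (\<lambda>s. \<beta> s J A * K)"
  proof (rule integral_norm_bound_integral)
    show "(\<lambda>s. complex_of_real (\<beta> s J A) * P s) integrable_on {l..m}"
      by (rule integrable_continuous_interval, rule continuous_on_subset[OF _ lm_sub])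
         (intro continuous_intros conts[OF J] Pc)
    show "(\<lambda>s. \<beta> s J A * K) integrable_on {l..m}"
      by (rule integrable_continuous_interval, rule continuous_on_subset[OF _ lm_sub])
         (intro continuous_intros conts[OF J])
    fix s assume "s \<in> {l..m}"
    then have s: "s \<in> {0..m}" using lm_sub by auto
    have "0 \<le> \<beta> s J A" using nonneg[OF s J] by simp
    then show "norm (complex_of_real (\<beta> s J A) * P s) \<le> \<beta> s J A * K"
      unfolding norm_mult using PK[OF s] by (simp add: mult_left_mono)
  qed
  then show ?thesis by simp
qed

lemma lin_int:
  assumes J: "0 \<le> J" "0 \<le> A" and Pc: "continuous_on {0..m} P"
  shows "integral {l..m} (\<lambda>s. complex_of_real (\<beta> s J A) * (p0 * exp (AA (az J A z) s) + P s))
     = p0 * Rc J A z + integral {l..m} (\<lambda>s. complex_of_real (\<beta> s J A) * P s)"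
proof -
  have i1: "(\<lambda>s. p0 * (complex_of_real (\<beta> s J A) * exp (AA (az J A z) s))) integrable_on {l..m}"
    by (rule integrable_continuous_interval, rule continuous_on_subset[OF _ lm_sub])
       (intro continuous_intros conts[OF J] continuous_on_AA az_cont[OF J])
  have i2: "(\<lambda>s. complex_of_real (\<beta> s J A) * P s) integrable_on {l..m}"
    by (rule integrable_continuous_interval, rule continuous_on_subset[OF _ lm_sub])
       (intro continuous_intros conts[OF J] Pc)
  have "integral {l..m} (\<lambda>s. complex_of_real (\<beta> s J A) * (p0 * exp (AA (az J A z) s) + P s))
     = integral {l..m} (\<lambda>s. p0 * (complex_of_real (\<beta> s J A) * exp (AA (az J A z) s)) + complex_of_real (\<beta> s J A) * P s)"
    by (simp add: algebra_simps)
  also have "\<dots> = integral {l..m} (\<lambda>s. p0 * (complex_of_real (\<beta> s J A) * exp (AA (az J A z) s)))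
       + integral {l..m} (\<lambda>s. complex_of_real (\<beta> s J A) * P s)"
    by (rule integral_add[OF i1 i2])
  also have "integral {l..m} (\<lambda>s. p0 * (complex_of_real (\<beta> s J A) * exp (AA (az J A z) s))) = p0 * Rc J A z"
    unfolding Rc_def by simp
  finally show ?thesis .
qed

lemma resolvent:
  assumes J: "0 \<le> J" "0 \<le> A" and R: "Rr J A 0 < \<gamma> 0 J A" and z: "0 \<le> Re z"
  shows "psi_resolvent \<beta> \<gamma> \<gamma>s \<mu> l m J A z"
proof -
  define a where "a = az J A z"
  have ac: "continuous_on {0..m} a" unfolding a_def by (rule az_cont[OF J])
  have m0: "0 \<le> m" using m_pos by simp
  have z0: "(0::real) \<in> {0..m}" using m0 by simp
  obtain C M where C0: "C \<ge> 0" and M0: "M \<ge> 0" and CM: "\<And>x. x \<in> {0..m} \<Longrightarrow> norm (exp (AA a x)) \<le> M"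
    and Cb: "\<And>x b. b absolutely_integrable_on {0..m} \<Longrightarrow> x \<in> {0..m} \<Longrightarrow>
        norm (solg a b 0 x) \<le> C * integral {0..m} (\<lambda>t. norm (b t))"
    using solg_bound[OF ac m0] by blast
  define D where "D = complex_of_real (\<gamma> 0 J A) - Rc J A z"
  define dd where "dd = \<gamma> 0 J A - Rr J A 0"
  have dd: "0 < dd" using R by (simp add: dd_def)
  have nD: "dd \<le> norm D"
  proof -
    have "norm (complex_of_real (\<gamma> 0 J A)) - norm (Rc J A z) \<le> norm D"
      unfolding D_def by (rule norm_triangle_ineq2)
    moreover have "norm (complex_of_real (\<gamma> 0 J A)) = \<gamma> 0 J A"
      using \<gamma>_pos[OF z0 J] by simp
    moreover have "norm (Rc J A z) \<le> Rr J A 0" by (rule Rc_le[OF J z])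
    ultimately show ?thesis unfolding dd_def by linarith
  qed
  have Dne: "D \<noteq> 0" using nD dd by auto
  define Bs where "Bs = integral {l..m} (\<lambda>s. \<beta> s J A)"
  have Bs0: "0 \<le> Bs" unfolding Bs_def
    by (rule integral_nonneg)
       (use integrable_continuous_interval[OF continuous_on_subset[OF conts(1)[OF J] lm_sub]]
         nonneg[OF _ J] lm_sub in auto)
  show ?thesis
    unfolding psi_resolvent_def
  proof (intro conjI allI impI)
    fix g :: "real \<Rightarrow> complex" assume g: "g absolutely_integrable_on {0..m}"
    define b where "b = bz J A g"
    have bi: "b integrable_on {0..m}"
      using bz_absint[OF J g] absolutely_integrable_on_def unfolding b_def by blast
    define P where "P = solg a b 0"
    have Pc: "continuous_on {0..m} P" unfolding P_def by (rule solg_facts(1)[OF ac bi])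
    define I where "I = integral {l..m} (\<lambda>s. complex_of_real (\<beta> s J A) * P s)"
    define p0 where "p0 = I / D"
    define p where "p = solg a b p0"
    have pe: "p = (\<lambda>x. p0 * exp (AA a x) + P x)"
      unfolding p_def P_def using solg_lin by blast
    have bc: "complex_of_real (\<gamma> 0 J A) * p0 = integral {l..m} (\<lambda>s. complex_of_real (\<beta> s J A) * p s)"
    proof -
      have "integral {l..m} (\<lambda>s. complex_of_real (\<beta> s J A) * p s) = p0 * Rc J A z + I"
        unfolding pe I_def a_def by (rule lin_int[OF J Pc])
      also have "I = p0 * D" unfolding p0_def using Dne by simp
      finally show ?thesis unfolding D_def by (simp add: algebra_simps)
    qed
    have G: "psi_graph \<beta> \<gamma> \<gamma>s \<mu> l m J A p (\<lambda>s. z * p s - g s)"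
      by (rule graph_construct[OF J g _ bc]) (simp add: p_def a_def b_def)
    show "\<exists>p f. psi_graph \<beta> \<gamma> \<gamma>s \<mu> l m J A p f \<and> negligible {s \<in> {0..m}. z * p s - f s \<noteq> g s}"
      by (intro exI[of _ p] exI[of _ "\<lambda>s. z * p s - g s"] conjI G) simp
  next
    show "\<exists>C. \<forall>p f. psi_graph \<beta> \<gamma> \<gamma>s \<mu> l m J A p f \<longrightarrow>
        integral {0..m} (\<lambda>s. norm (p s)) \<le> C * integral {0..m} (\<lambda>s. norm (z * p s - f s))"
    proof (intro exI[of _ "m * (M * (Bs * (C / \<gamma>0)) / dd + C / \<gamma>0)"] allI impI)
      fix p f assume G: "psi_graph \<beta> \<gamma> \<gamma>s \<mu> l m J A p f"
      have pc: "continuous_on {0..m} p" by (rule graph_unique(1)[OF J G])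
      define g where "g = (\<lambda>s. z * p s - f s)"
      have gi: "g absolutely_integrable_on {0..m}" unfolding g_def by (rule graph_unique(2)[where z = z, OF J G])
      define NG where "NG = integral {0..m} (\<lambda>t. norm (g t))"
      have NG0: "0 \<le> NG" unfolding NG_def
        by (rule integral_nonneg) (use gi absolutely_integrable_on_def in auto)
      define b where "b = bz J A g"
      have bai: "b absolutely_integrable_on {0..m}" unfolding b_def by (rule bz_absint[OF J gi])
      then have bi: "b integrable_on {0..m}" using absolutely_integrable_on_def by blast
      define P where "P = solg a b 0"
      have Pc: "continuous_on {0..m} P" unfolding P_def by (rule solg_facts(1)[OF ac bi])
      define K where "K = C / \<gamma>0 * NG"
      have K0: "0 \<le> K" unfolding K_def using C0 NG0 \<gamma>0(1) by simp
      have PK: "norm (P x) \<le> K" if x: "x \<in> {0..m}" for x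
      proof -
        have "norm (P x) \<le> C * integral {0..m} (\<lambda>t. norm (b t))"
          unfolding P_def by (rule Cb[OF bai x])
        also have "\<dots> \<le> C * (NG / \<gamma>0)"
          using bz_norm[OF J gi] C0 unfolding b_def NG_def by (intro mult_left_mono) auto
        finally show ?thesis by (simp add: K_def)
      qed
      have peq: "p x = p 0 * exp (AA a x) + P x" if x: "x \<in> {0..m}" for x
      proof -
        have "p x = solg a b (p 0) x"
          using graph_unique(3)[where z = z, OF J G x] unfolding a_def b_def g_def .
        also have "\<dots> = p 0 * exp (AA a x) + P x" unfolding P_def by (rule solg_lin)
        finally show ?thesis .
      qed
      have bcG: "complex_of_real (\<gamma> 0 J A) * p 0 = integral {l..m} (\<lambda>s. complex_of_real (\<beta> s J A) * p s)"
        using G unfolding psi_graph_def psi_dom_def by blast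
      also have "\<dots> = integral {l..m} (\<lambda>s. complex_of_real (\<beta> s J A) * (p 0 * exp (AA a s) + P s))"
      proof (rule integral_cong)
        fix s assume "s \<in> {l..m}"
        then have "s \<in> {0..m}" using lm_sub by auto
        then show "complex_of_real (\<beta> s J A) * p s = complex_of_real (\<beta> s J A) * (p 0 * exp (AA a s) + P s)"
          by (simp only: peq)
      qed
      also have "\<dots> = p 0 * Rc J A z + integral {l..m} (\<lambda>s. complex_of_real (\<beta> s J A) * P s)"
        unfolding a_def by (rule lin_int[OF J Pc])
      finally have "p 0 * D = integral {l..m} (\<lambda>s. complex_of_real (\<beta> s J A) * P s)"
        unfolding D_def by (simp add: algebra_simps)
      then have "norm (p 0) * norm D \<le> Bs * K"
        using \<beta>_int_bound[OF J Pc PK] unfolding Bs_def by (metis norm_mult)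
      then have "norm (p 0) * dd \<le> Bs * K"
        using nD by (smt (verit) mult_left_mono norm_ge_zero)
      then have p0b: "norm (p 0) \<le> Bs * K / dd" using dd by (simp add: pos_le_divide_eq)
      have pb: "norm (p x) \<le> Bs * K / dd * M + K" if x: "x \<in> {0..m}" for x
      proof -
        have "norm (p x) \<le> norm (p 0) * norm (exp (AA a x)) + norm (P x)"
          unfolding peq[OF x] by (metis norm_mult norm_triangle_ineq)
        also have "\<dots> \<le> Bs * K / dd * M + K"
          using p0b CM[OF x] PK[OF x] M0 Bs0 K0 dd by (intro add_mono mult_mono) auto
        finally show ?thesis .
      qed
      have "integral {0..m} (\<lambda>s. norm (p s)) \<le> integral {0..m} (\<lambda>s. Bs * K / dd * M + K)"
        by (rule integral_le) (use pb integrable_continuous_interval[OF continuous_on_norm[OF pc]] in auto)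
      also have "\<dots> = m * (Bs * K / dd * M + K)" using m0 by simp
      also have "\<dots> = m * (M * (Bs * (C / \<gamma>0)) / dd + C / \<gamma>0) * NG"
        unfolding K_def by (simp add: algebra_simps)
      finally show "integral {0..m} (\<lambda>s. norm (p s)) \<le>
          m * (M * (Bs * (C / \<gamma>0)) / dd + C / \<gamma>0) * integral {0..m} (\<lambda>s. norm (z * p s - f s))"
        by (simp add: NG_def g_def)
    qed
  qed
qed

end

context model
begin

lemma zero_absint: "(\<lambda>_::real. 0::complex) absolutely_integrable_on {0..m}"
  by (rule absolutely_integrable_continuous_real) (rule continuous_on_const)

lemma eigen:
  assumes J: "0 \<le> J" "0 \<le> A" and Rc: "Rr J A c = \<gamma> 0 J A"
  shows "complex_of_real c \<in> psi_spectrum \<beta> \<gamma> \<gamma>s \<mu> l m J A"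
proof -
  define a where "a = az J A (complex_of_real c)"
  define p where "p = (\<lambda>s. exp (AA a s))"
  have pe: "p x = solg a (bz J A (\<lambda>_. 0)) 1 x" if "x \<in> {0..m}" for x
  proof -
    have "bz J A (\<lambda>_. 0) = (\<lambda>_. 0)" by (simp add: bz_def fun_eq_iff)
    then show ?thesis by (simp add: solg_def p_def)
  qed
  have pr: "p s = complex_of_real (Er J A c s)" if "s \<in> {0..m}" for s
    unfolding p_def a_def by (rule AA_real[OF J that])
  have ir: "(\<lambda>s. \<beta> s J A * Er J A c s) integrable_on {l..m}"
    by (rule integrable_continuous_interval, rule continuous_on_subset[OF _ lm_sub])
       (intro continuous_intros conts[OF J] Er_cont[OF J])
  have "integral {l..m} (\<lambda>s. complex_of_real (\<beta> s J A) * p s)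
      = integral {l..m} (complex_of_real \<circ> (\<lambda>s. \<beta> s J A * Er J A c s))"
  proof (rule integral_cong)
    fix s assume "s \<in> {l..m}"
    then have "s \<in> {0..m}" using lm_sub by auto
    then show "complex_of_real (\<beta> s J A) * p s = (complex_of_real \<circ> (\<lambda>s. \<beta> s J A * Er J A c s)) s"
      by (simp add: pr)
  qed
  also have "\<dots> = complex_of_real (Rr J A c)"
    unfolding Rr_def by (rule integral_linear[OF ir bounded_linear_of_real])
  finally have bc: "complex_of_real (\<gamma> 0 J A) * 1 = integral {l..m} (\<lambda>s. complex_of_real (\<beta> s J A) * p s)"
    using Rc by simp
  have G: "psi_graph \<beta> \<gamma> \<gamma>s \<mu> l m J A p (\<lambda>s. complex_of_real c * p s - 0)"
    by (rule graph_construct[OF J zero_absint _ bc]) (use pe a_def in simp)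
  show ?thesis
    unfolding psi_spectrum_def
  proof (rule CollectI, rule notI)
    assume "psi_resolvent \<beta> \<gamma> \<gamma>s \<mu> l m J A (complex_of_real c)"
    then obtain C where C: "\<And>p f. psi_graph \<beta> \<gamma> \<gamma>s \<mu> l m J A p f \<Longrightarrow>
        integral {0..m} (\<lambda>s. norm (p s)) \<le> C * integral {0..m} (\<lambda>s. norm (complex_of_real c * p s - f s))"
      unfolding psi_resolvent_def by blast
    have le: "integral {0..m} (\<lambda>s. norm (p s)) \<le> 0"
      using C[OF G] by simp
    have "integral {0..m} (\<lambda>s. norm (p s)) = integral {0..m} (Er J A c)"
      by (rule integral_cong) (simp add: pr Er_pos less_imp_le)
    moreover have "0 < integral {0..m} (Er J A c)"
      by (rule integral_pos_cont[OF m_pos Er_cont[OF J] Er_pos])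
    ultimately show False using le by simp
  qed
qed


lemma exists_lam:
  assumes J: "0 \<le> J" "0 \<le> A" and R: "\<gamma> 0 J A < Rr J A 0"
  shows "\<exists>c>0. Rr J A c = \<gamma> 0 J A"
proof -
  define T where "T = (\<lambda>s. integral {0..s} (\<lambda>t. 1 / \<gamma> t J A))"
  have ic: "continuous_on {0..m} (\<lambda>t. 1 / \<gamma> t J A)"
    using conts[OF J] by (intro continuous_intros) (auto simp: \<gamma>_ne J)
  have Tc: "continuous_on {0..m} T" unfolding T_def
    by (rule indefinite_integral_continuous_1[OF integrable_continuous_interval[OF ic]])
  have Ts: "Ti J A c s = Ti J A 0 s + c * T s" if s: "s \<in> {0..m}" for s c
  proof -
    have sub: "{0..s} \<subseteq> {0..m}" using s by auto
    have i1: "(\<lambda>t. (\<gamma>s t J A + \<mu> t J A + 0) / \<gamma> t J A) integrable_on {0..s}"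
      by (rule integrable_continuous_interval[OF continuous_on_subset[OF k_cont[OF J] sub]])
    have i2: "(\<lambda>t. c * (1 / \<gamma> t J A)) integrable_on {0..s}"
      by (rule integrable_continuous_interval[OF continuous_on_subset[OF _ sub]])
         (intro continuous_intros ic)
    have "Ti J A c s = integral {0..s} (\<lambda>t. (\<gamma>s t J A + \<mu> t J A + 0) / \<gamma> t J A + c * (1 / \<gamma> t J A))"
      unfolding Ti_def by (rule integral_cong) (simp add: add_divide_distrib)
    also have "\<dots> = Ti J A 0 s + integral {0..s} (\<lambda>t. c * (1 / \<gamma> t J A))"
      unfolding Ti_def by (rule integral_add[OF i1 i2])
    also have "integral {0..s} (\<lambda>t. c * (1 / \<gamma> t J A)) = c * T s"
      unfolding T_def by (rule Henstock_Kurzweil_Integration.integral_mult_right)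
    finally show ?thesis .
  qed
  have Ers: "Er J A c s = Er J A 0 s * exp (- (c * T s))" if s: "s \<in> {0..m}" for s c
    unfolding Er_def Ts[OF s, of c] by (simp add: mult_exp_exp)
  define h where "h = (\<lambda>c. integral {l..m} (\<lambda>s. \<beta> s J A * (Er J A 0 s * exp (- (c * T s)))))"
  have hR: "Rr J A c = h c" for c
    unfolding Rr_def h_def
  proof (rule integral_cong)
    fix s assume "s \<in> {l..m}"
    then have sm: "s \<in> {0..m}" using lm_sub by auto
    show "\<beta> s J A * Er J A c s = \<beta> s J A * (Er J A 0 s * exp (- (c * T s)))"
      by (simp only: Ers[OF sm, of c])
  qed
  have hc: "continuous_on UNIV h"
  proof -
    have c1: "continuous_on (UNIV \<times> cbox l m)
        (\<lambda>x. \<beta> (snd x) J A * (Er J A 0 (snd x) * exp (- (fst x * T (snd x)))))"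
      unfolding box_real
      by (intro continuous_intros cont_snd continuous_on_subset[OF _ lm_sub] conts[OF J] Er_cont[OF J] Tc)
    have "continuous_on UNIV (\<lambda>c. integral (cbox l m) (\<lambda>s. \<beta> s J A * (Er J A 0 s * exp (- (c * T s)))))"
      by (rule integral_continuous_on_param) (use c1 in \<open>simp add: case_prod_beta'\<close>)
    then show ?thesis unfolding h_def box_real .
  qed
  obtain \<Gamma> where \<Gamma>: "\<Gamma> \<ge> 0" "\<And>s. s \<in> {0..m} \<Longrightarrow> norm (\<gamma> s J A) \<le> \<Gamma>"
    using bound_continuous[OF conts(2)[OF J]] by metis
  have z0: "(0::real) \<in> {0..m}" using m_pos by simp
  define g0 where "g0 = \<gamma> 0 J A"
  have g0: "0 < g0" unfolding g0_def by (rule \<gamma>_pos[OF z0 J])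
  have \<Gamma>p: "0 < \<Gamma>" using \<Gamma>(2)[OF z0] g0 unfolding g0_def by simp
  have Tl: "s / \<Gamma> \<le> T s" if s: "s \<in> {0..m}" for s
  proof -
    have sub: "{0..s} \<subseteq> {0..m}" using s by auto
    have "integral {0..s} (\<lambda>_. 1 / \<Gamma>) \<le> T s"
      unfolding T_def
    proof (rule integral_le)
      show "(\<lambda>_. 1 / \<Gamma>) integrable_on {0..s}" by (rule integrable_const_ivl)
      show "(\<lambda>t. 1 / \<gamma> t J A) integrable_on {0..s}"
        by (rule integrable_continuous_interval[OF continuous_on_subset[OF ic sub]])
      fix t assume "t \<in> {0..s}"
      then have t: "t \<in> {0..m}" using sub by auto
      have "\<gamma> t J A \<le> \<Gamma>" using \<Gamma>(2)[OF t] by simp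
      then show "1 / \<Gamma> \<le> 1 / \<gamma> t J A" using \<gamma>_pos[OF t J] by (simp add: frac_le)
    qed
    then show ?thesis using s by simp
  qed
  define h0 where "h0 = Rr J A 0"
  define y where "y = h0 / g0"
  define \<Lambda> where "\<Lambda> = \<Gamma> * y / l"
  have y0: "0 < y" using R g0 unfolding y_def h0_def g0_def by simp
  have \<Lambda>0: "0 \<le> \<Lambda>" using \<Gamma>p y0 lm unfolding \<Lambda>_def by simp
  have hle: "h \<Lambda> \<le> exp (- y) * h0"
  proof -
    have "h \<Lambda> \<le> integral {l..m} (\<lambda>s. (\<beta> s J A * Er J A 0 s) * exp (- y))"
      unfolding h_def
    proof (rule integral_le)
      show "(\<lambda>s. \<beta> s J A * (Er J A 0 s * exp (- (\<Lambda> * T s)))) integrable_on {l..m}"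
        by (rule integrable_continuous_interval, rule continuous_on_subset[OF _ lm_sub])
           (intro continuous_intros conts[OF J] Er_cont[OF J] Tc)
      show "(\<lambda>s. (\<beta> s J A * Er J A 0 s) * exp (- y)) integrable_on {l..m}"
        by (rule integrable_continuous_interval, rule continuous_on_subset[OF _ lm_sub])
           (intro continuous_intros conts[OF J] Er_cont[OF J])
      fix s assume sl: "s \<in> {l..m}"
      then have s: "s \<in> {0..m}" using lm_sub by auto
      have "y \<le> \<Lambda> * T s"
      proof -
        have "y = \<Lambda> * (l / \<Gamma>)" unfolding \<Lambda>_def using \<Gamma>p lm by simp
        also have "\<dots> \<le> \<Lambda> * (s / \<Gamma>)" using sl \<Gamma>p \<Lambda>0
          by (intro mult_left_mono divide_right_mono) auto
        also have "\<dots> \<le> \<Lambda> * T s" using Tl[OF s] \<Lambda>0 by (intro mult_left_mono) auto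
        finally show ?thesis .
      qed
      then have "exp (- (\<Lambda> * T s)) \<le> exp (- y)" by simp
      moreover have "0 \<le> \<beta> s J A * Er J A 0 s" using nonneg[OF s J] Er_pos[of J A 0 s] by simp
      ultimately show "\<beta> s J A * (Er J A 0 s * exp (- (\<Lambda> * T s))) \<le> (\<beta> s J A * Er J A 0 s) * exp (- y)"
        by (metis mult.assoc mult_left_mono)
    qed
    also have "\<dots> = exp (- y) * h0" unfolding h0_def Rr_def by simp
    finally show ?thesis .
  qed
  have "exp (- y) * h0 < g0"
  proof -
    have "y < exp y" by (rule exp_gt_self)
    then have "y * exp (- y) < exp y * exp (- y)" by simp
    then have "y * exp (- y) < 1" by (simp add: mult_exp_exp)
    then have "g0 * (y * exp (- y)) < g0 * 1" using g0 by simp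
    moreover have "exp (- y) * h0 = g0 * (y * exp (- y))" unfolding y_def using g0 by simp
    ultimately show ?thesis by (simp add: mult_ac)
  qed
  then have hL: "h \<Lambda> \<le> g0" using hle by simp
  have h0g: "g0 \<le> h 0" using R hR[of 0] unfolding g0_def by simp
  obtain x where x: "0 \<le> x" "x \<le> \<Lambda>" "h x = g0"
    using IVT2'[of h \<Lambda> g0 0, OF hL h0g \<Lambda>0 continuous_on_subset[OF hc]] by auto
  have "x \<noteq> 0" using x(3) R hR[of 0] unfolding g0_def by auto
  then have "0 < x" using x(1) by simp
  then show ?thesis using x(3) hR[of x] unfolding g0_def by auto
qed

lemma R_small:
  assumes J: "0 \<le> J" "0 \<le> A" and sb: "psi_spectral_bound \<beta> \<gamma> \<gamma>s \<mu> l m J A > 0"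
  shows "\<gamma> 0 J A \<le> Rr J A 0"
proof (rule ccontr)
  assume "\<not> \<gamma> 0 J A \<le> Rr J A 0"
  then have R: "Rr J A 0 < \<gamma> 0 J A" by simp
  have "\<forall>z\<in>psi_spectrum \<beta> \<gamma> \<gamma>s \<mu> l m J A. ereal (Re z) \<le> 0"
  proof
    fix z assume z: "z \<in> psi_spectrum \<beta> \<gamma> \<gamma>s \<mu> l m J A"
    show "ereal (Re z) \<le> 0"
    proof (rule ccontr)
      assume "\<not> ereal (Re z) \<le> 0"
      then have "0 \<le> Re z" by simp
      then have "psi_resolvent \<beta> \<gamma> \<gamma>s \<mu> l m J A z" by (rule resolvent[OF J R])
      then show False using z unfolding psi_spectrum_def by simp
    qed
  qed
  then have "psi_spectral_bound \<beta> \<gamma> \<gamma>s \<mu> l m J A \<le> 0"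
    unfolding psi_spectral_bound_def by (simp add: Sup_le_iff)
  then show False using sb by simp
qed

lemma R_large:
  assumes J: "0 \<le> J" "0 \<le> A" and sb: "psi_spectral_bound \<beta> \<gamma> \<gamma>s \<mu> l m J A < 0"
  shows "Rr J A 0 \<le> \<gamma> 0 J A"
proof (rule ccontr)
  assume "\<not> Rr J A 0 \<le> \<gamma> 0 J A"
  then obtain c where c: "0 < c" "Rr J A c = \<gamma> 0 J A" using exists_lam[OF J] by force
  have "complex_of_real c \<in> psi_spectrum \<beta> \<gamma> \<gamma>s \<mu> l m J A" by (rule eigen[OF J c(2)])
  then have "ereal (Re (complex_of_real c)) \<le> psi_spectral_bound \<beta> \<gamma> \<gamma>s \<mu> l m J A"
    unfolding psi_spectral_bound_def by (intro Sup_upper imageI)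
  then have "ereal c \<le> psi_spectral_bound \<beta> \<gamma> \<gamma>s \<mu> l m J A" by (simp only: Re_complex_of_real)
  then have "ereal c < 0" using sb by (rule le_less_trans)
  then have "c < 0" by (simp only: ereal_less(1))
  then show False using c(1) by linarith
qed

end

lemma cont3:
  assumes "continuous_on S (\<lambda>(s, J, A). f s J A)"
  shows "continuous_on S (\<lambda>x. f (fst x) (fst (snd x)) (snd (snd x)))"
proof -
  have "(\<lambda>(s, J, A). f s J A) = (\<lambda>x. f (fst x) (fst (snd x)) (snd (snd x)))"
    by (auto simp: fun_eq_iff split: prod.splits)
  then show ?thesis using assms by simp
qed

lemma st_le: "0 \<le> s \<Longrightarrow> s \<le> m \<Longrightarrow> 0 \<le> t \<Longrightarrow> t \<le> (1::real) \<Longrightarrow> s * t \<le> m"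
  by (metis mult_left_le order_trans)

context model
begin

abbreviation "Q \<equiv> ({0..} \<times> {0..}) :: (real \<times> real) set"

definition Kx :: "real \<times> real \<times> real \<Rightarrow> real" where
  "Kx x = (\<gamma>s (fst x) (fst (snd x)) (snd (snd x)) + \<mu> (fst x) (fst (snd x)) (snd (snd x))) /
          \<gamma> (fst x) (fst (snd x)) (snd (snd x))"

lemma Kx_cont: "continuous_on ({0..m} \<times> Q) Kx"
proof -
  have g: "continuous_on ({0..m} \<times> Q) (\<lambda>x. \<gamma> (fst x) (fst (snd x)) (snd (snd x)))"
    by (rule cont3[OF cont_\<gamma>])
  show ?thesis
    unfolding Kx_def
    using cont3[OF cont_\<gamma>s] cont3[OF cont_\<mu>] g
    by (intro continuous_intros) (auto simp: \<gamma>_ne)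
qed

definition Tj :: "(real \<times> real) \<times> real \<Rightarrow> real" where
  "Tj x = integral (cbox 0 1) (\<lambda>\<tau>. snd x * Kx (snd x * \<tau>, fst x))"

lemma Tj_cont: "continuous_on (Q \<times> {0..m}) Tj"
proof -
  have sub1: "(\<lambda>x. (snd (fst x) * snd x, fst (fst x))) ` ((Q \<times> {0..m}) \<times> cbox 0 1) \<subseteq> {0..m} \<times> Q"
    using st_le by (force simp: box_real)
  have k: "continuous_on ((Q \<times> {0..m}) \<times> cbox 0 1) (\<lambda>x. Kx (snd (fst x) * snd x, fst (fst x)))"
    by (rule continuous_on_compose2[OF Kx_cont _ sub1]) (intro continuous_intros)
  have c: "continuous_on ((Q \<times> {0..m}) \<times> cbox 0 1)
     (\<lambda>w. snd (fst w) * Kx (snd (fst w) * snd w, fst (fst w)))"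
    by (intro continuous_intros k)
  have "continuous_on (Q \<times> {0..m}) (\<lambda>x. integral (cbox 0 1) (\<lambda>\<tau>. snd x * Kx (snd x * \<tau>, fst x)))"
    by (rule integral_continuous_on_param) (use c in \<open>simp add: case_prod_beta'\<close>)
  then show ?thesis unfolding Tj_def[abs_def] .
qed

lemma Tj_eq:
  assumes y: "y \<in> Q" and s: "s \<in> {0..m}"
  shows "Ti (fst y) (snd y) 0 s = Tj (y, s)"
proof -
  have J: "0 \<le> fst y" "0 \<le> snd y" using y by auto
  have "((\<lambda>\<tau>. s *\<^sub>R (\<lambda>t. (\<gamma>s t (fst y) (snd y) + \<mu> t (fst y) (snd y) + 0) / \<gamma> t (fst y) (snd y)) (s * \<tau>))
      has_integral integral {s * 0..s * 1} (\<lambda>t. (\<gamma>s t (fst y) (snd y) + \<mu> t (fst y) (snd y) + 0) / \<gamma> t (fst y) (snd y))) {0..1}"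
  proof (rule has_integral_substitution[where c = 0 and d = m])
    show "(\<lambda>\<tau>. s * \<tau>) ` {0..1} \<subseteq> {0..m}"
      using s by (auto simp: mult_le_one order_trans[OF mult_left_le])
    show "continuous_on {0..m} (\<lambda>t. (\<gamma>s t (fst y) (snd y) + \<mu> t (fst y) (snd y) + 0) / \<gamma> t (fst y) (snd y))"
      by (rule k_cont[OF J])
    fix x show "((\<lambda>\<tau>. s * \<tau>) has_real_derivative s) (at x within {0..1})"
      by (auto intro!: derivative_eq_intros)
  qed (use s in auto)
  then have "integral {0..1} (\<lambda>\<tau>. s * Kx (s * \<tau>, y)) = Ti (fst y) (snd y) 0 s"
    unfolding Ti_def Kx_def by (simp add: integral_unique)
  then show ?thesis unfolding Tj_def by (simp add: box_real)
qed

lemma Er_joint: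
  assumes "c \<le> d" "{c..d} \<subseteq> {0..m}"
  shows "continuous_on (Q \<times> cbox c d) (\<lambda>(y, s). Er (fst y) (snd y) 0 s)"
proof -
  have sub: "Q \<times> cbox c d \<subseteq> Q \<times> {0..m}" using assms by (auto simp: box_real)
  have "continuous_on (Q \<times> cbox c d) (\<lambda>x. exp (- Tj x))"
    by (intro continuous_intros continuous_on_subset[OF Tj_cont sub])
  then show ?thesis
  proof (rule continuous_on_eq)
    fix w assume w: "w \<in> Q \<times> cbox c d"
    then have "w \<in> Q \<times> {0..m}" using sub by blast
    then have "fst w \<in> Q" "snd w \<in> {0..m}" by auto
    then show "exp (- Tj w) = (\<lambda>(y, s). Er (fst y) (snd y) 0 s) w"
      using Tj_eq[of "fst w" "snd w"] by (simp add: Er_def case_prod_beta)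
  qed
qed

lemma F_cont:
  shows "continuous_on Q (\<lambda>y. integral {0..l} (Er (fst y) (snd y) 0))"
    and "continuous_on Q (\<lambda>y. integral {l..m} (Er (fst y) (snd y) 0))"
    and "continuous_on Q (\<lambda>y. Rr (fst y) (snd y) 0)"
    and "continuous_on Q (\<lambda>y. \<gamma> 0 (fst y) (snd y))"
proof -
  show "continuous_on Q (\<lambda>y. integral {0..l} (Er (fst y) (snd y) 0))"
    using integral_continuous_on_param[OF Er_joint[of 0 l]] lm by (simp add: box_real)
  show "continuous_on Q (\<lambda>y. integral {l..m} (Er (fst y) (snd y) 0))"
    using integral_continuous_on_param[OF Er_joint[of l m]] lm by (simp add: box_real)
  have b: "continuous_on (Q \<times> cbox l m) (\<lambda>w. \<beta> (snd w) (fst (fst w)) (snd (fst w)))"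
    by (rule continuous_on_compose2[OF cont3[OF cont_\<beta>], of _ "\<lambda>w. (snd w, fst w)", simplified])
       (use lm in \<open>auto intro!: continuous_intros simp: box_real\<close>)
  have e: "continuous_on (Q \<times> cbox l m) (\<lambda>w. Er (fst (fst w)) (snd (fst w)) 0 (snd w))"
    using Er_joint[of l m] lm by (simp add: case_prod_beta')
  have "continuous_on (Q \<times> cbox l m) (\<lambda>(y, s). \<beta> s (fst y) (snd y) * Er (fst y) (snd y) 0 s)"
    using continuous_on_mult[OF b e] by (simp add: case_prod_beta')
  then show "continuous_on Q (\<lambda>y. Rr (fst y) (snd y) 0)"
    unfolding Rr_def using integral_continuous_on_param by (fastforce simp: box_real)
  show "continuous_on Q (\<lambda>y. \<gamma> 0 (fst y) (snd y))"
    by (rule continuous_on_compose2[OF cont3[OF cont_\<gamma>], of _ "\<lambda>y. (0, y)", simplified])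
       (use lm in \<open>auto intro!: continuous_intros\<close>)
qed

end

lemma clamp_fix:
  fixes a b x g :: real
  assumes "a \<le> x" "x \<le> b" "max a (min b (x - g)) = x" "x = a \<Longrightarrow> g \<le> 0" "x = b \<Longrightarrow> 0 \<le> g"
  shows "g = 0"
  using assms unfolding max_def min_def by (smt (verit))

context model
begin

lemma steady:
  assumes r: "0 < r1" "r1 < r2"
    and small: "\<And>J A. 0 \<le> J \<Longrightarrow> 0 \<le> A \<Longrightarrow> J + A \<le> r1 \<Longrightarrow>
                  psi_spectral_bound \<beta> \<gamma> \<gamma>s \<mu> l m J A > 0"
    and large: "\<And>J A. 0 \<le> J \<Longrightarrow> 0 \<le> A \<Longrightarrow> r2 \<le> J + A \<Longrightarrow>
                  psi_spectral_bound \<beta> \<gamma> \<gamma>s \<mu> l m J A < 0"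
  shows "\<exists>p :: real \<Rightarrow> real.
           (\<forall>s\<in>{0..m}. 0 \<le> p s) \<and>
           \<not> negligible {s\<in>{0..m}. p s \<noteq> 0} \<and>
           psi_graph \<beta> \<gamma> \<gamma>s \<mu> l m (integral {0..l} p) (integral {l..m} p)
             (\<lambda>s. complex_of_real (p s)) (\<lambda>s. 0)"
proof -
  define F1 where "F1 = (\<lambda>y. integral {0..l} (Er (fst y) (snd y) 0))"
  define F2 where "F2 = (\<lambda>y. integral {l..m} (Er (fst y) (snd y) 0))"
  define F3 where "F3 = (\<lambda>y. Rr (fst y) (snd y) 0 - \<gamma> 0 (fst y) (snd y))"
  have F1c: "continuous_on Q F1" unfolding F1_def by (rule F_cont(1))
  have F2c: "continuous_on Q F2" unfolding F2_def by (rule F_cont(2))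
  have F3c: "continuous_on Q F3" unfolding F3_def by (intro continuous_intros F_cont(3) F_cont(4))
  define Y where "Y = (\<lambda>w::real \<times> real. (fst w * snd w, (1 - fst w) * snd w))"
  define S where "S = {0..1::real} \<times> {r1..r2}"
  have YS: "Y ` S \<subseteq> Q" unfolding Y_def S_def using r by auto
  have Yc: "continuous_on S Y" unfolding Y_def by (intro continuous_intros)
  have c1: "continuous_on S (\<lambda>w. F1 (Y w))" by (rule continuous_on_compose2[OF F1c Yc YS])
  have c2: "continuous_on S (\<lambda>w. F2 (Y w))" by (rule continuous_on_compose2[OF F2c Yc YS])
  have c3: "continuous_on S (\<lambda>w. F3 (Y w))" by (rule continuous_on_compose2[OF F3c Yc YS])
  define G1 where "G1 = (\<lambda>w. fst w * (F1 (Y w) + F2 (Y w)) - F1 (Y w))"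
  define G2 where "G2 = (\<lambda>w. F3 (Y w))"
  define \<Phi> where "\<Phi> = (\<lambda>w. (max 0 (min 1 (fst w - G1 w)), max r1 (min r2 (snd w + G2 w))))"
  have \<Phi>c: "continuous_on S \<Phi>"
    unfolding \<Phi>_def G1_def G2_def using c1 c2 c3 by (intro continuous_intros)
  have \<Phi>S: "\<Phi> \<in> S \<rightarrow> S" unfolding \<Phi>_def S_def using r by auto
  have cS: "compact S" unfolding S_def by (intro compact_Times compact_Icc)
  have vS: "convex S" unfolding S_def by (intro convex_Times convex_real_interval)
  have nS: "S \<noteq> {}" unfolding S_def using r by auto
  obtain w where w: "w \<in> S" "\<Phi> w = w" using brouwer[OF cS vS nS \<Phi>c \<Phi>S] by blast
  define x where "x = fst w"
  define \<sigma> where "\<sigma> = snd w"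
  have x: "0 \<le> x" "x \<le> 1" and \<sigma>: "r1 \<le> \<sigma>" "\<sigma> \<le> r2" using w(1) unfolding S_def x_def \<sigma>_def by auto
  define J where "J = x * \<sigma>"
  define A where "A = (1 - x) * \<sigma>"
  have JA: "0 \<le> J" "0 \<le> A" unfolding J_def A_def using x \<sigma> r by auto
  have JAs: "J + A = \<sigma>" unfolding J_def A_def by (simp add: algebra_simps)
  have Yw: "Y w = (J, A)" unfolding Y_def J_def A_def x_def \<sigma>_def by simp
  have F1v: "F1 (Y w) = integral {0..l} (Er J A 0)" unfolding F1_def Yw by simp
  have F2v: "F2 (Y w) = integral {l..m} (Er J A 0)" unfolding F2_def Yw by simp
  have F3v: "F3 (Y w) = Rr J A 0 - \<gamma> 0 J A" unfolding F3_def Yw by simp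
  have l0: "{0..l} \<subseteq> {0..m}" using lm by auto
  have F1n: "0 \<le> F1 (Y w)" unfolding F1v
    by (rule integral_nonneg)
       (use integrable_continuous_interval[OF continuous_on_subset[OF Er_cont[OF JA] l0]] Er_pos[THEN less_imp_le] in auto)
  have F2p: "0 < F2 (Y w)" unfolding F2v
    by (rule integral_pos_cont[OF lm(2) continuous_on_subset[OF Er_cont[OF JA] lm_sub] Er_pos])
  have G1z: "G1 w = 0"
  proof (rule clamp_fix[of 0 x 1])
    show "max 0 (min 1 (x - G1 w)) = x" using w(2) unfolding \<Phi>_def x_def by (metis fst_conv)
    show "x = 0 \<Longrightarrow> G1 w \<le> 0" unfolding G1_def x_def using F1n by simp
    show "x = 1 \<Longrightarrow> 0 \<le> G1 w" unfolding G1_def x_def using F2p by simp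
  qed (use x in auto)
  have G2z: "- G2 w = 0"
  proof (rule clamp_fix[of r1 \<sigma> r2])
    show "max r1 (min r2 (\<sigma> - - G2 w)) = \<sigma>" using w(2) unfolding \<Phi>_def \<sigma>_def by (metis snd_conv diff_minus_eq_add)
    show "\<sigma> = r1 \<Longrightarrow> - G2 w \<le> 0"
    proof -
      assume "\<sigma> = r1"
      then have "psi_spectral_bound \<beta> \<gamma> \<gamma>s \<mu> l m J A > 0" using small[OF JA] JAs by simp
      then have "\<gamma> 0 J A \<le> Rr J A 0" by (rule R_small[OF JA])
      then show "- G2 w \<le> 0" unfolding G2_def F3v by simp
    qed
    show "\<sigma> = r2 \<Longrightarrow> 0 \<le> - G2 w"
    proof -
      assume "\<sigma> = r2"
      then have "psi_spectral_bound \<beta> \<gamma> \<gamma>s \<mu> l m J A < 0" using large[OF JA] JAs by simp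
      then have "Rr J A 0 \<le> \<gamma> 0 J A" by (rule R_large[OF JA])
      then show "0 \<le> - G2 w" unfolding G2_def F3v by simp
    qed
  qed (use \<sigma> in auto)
  define a1 where "a1 = integral {0..l} (Er J A 0)"
  define a2 where "a2 = integral {l..m} (Er J A 0)"
  have a2p: "0 < a2" using F2p F2v a2_def by simp
  have a1n: "0 \<le> a1" using F1n F1v a1_def by simp
  have xeq: "x * (a1 + a2) = a1" using G1z unfolding G1_def a1_def a2_def F1v F2v x_def by simp
  have Req: "Rr J A 0 = \<gamma> 0 J A" using G2z unfolding G2_def F3v by simp
  define c where "c = \<sigma> / (a1 + a2)"
  have c0: "0 < c" unfolding c_def using a1n a2p \<sigma> r by simp
  define p where "p = (\<lambda>s. c * Er J A 0 s)"
  have pJ: "integral {0..l} p = J"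
  proof -
    have "integral {0..l} p = c * a1" unfolding p_def a1_def by simp
    also have "\<dots> = \<sigma> * x" unfolding c_def using xeq a1n a2p by (simp add: field_simps)
    finally show ?thesis unfolding J_def by simp
  qed
  have pA: "integral {l..m} p = A"
  proof -
    have "integral {l..m} p = c * a2" unfolding p_def a2_def by simp
    also have "\<dots> = \<sigma> * (1 - x)" unfolding c_def using xeq a1n a2p by (simp add: field_simps)
    finally show ?thesis unfolding A_def by simp
  qed
  have pe: "complex_of_real (p x) = solg (az J A 0) (bz J A (\<lambda>_. 0)) (complex_of_real c) x"
    if xm: "x \<in> {0..m}" for x
  proof -
    have bz0: "bz J A (\<lambda>_. 0) = (\<lambda>_. 0)" by (simp add: bz_def fun_eq_iff)
    have "exp (AA (az J A 0) x) = complex_of_real (Er J A 0 x)" using AA_real[OF JA xm, of 0] by simp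
    then show ?thesis by (simp add: solg_def bz0 p_def)
  qed
  have ir: "(\<lambda>s. \<beta> s J A * p s) integrable_on {l..m}"
    unfolding p_def
    by (rule integrable_continuous_interval, rule continuous_on_subset[OF _ lm_sub])
       (intro continuous_intros conts[OF JA] Er_cont[OF JA])
  have "integral {l..m} (\<lambda>s. complex_of_real (\<beta> s J A) * complex_of_real (p s))
       = integral {l..m} (complex_of_real \<circ> (\<lambda>s. \<beta> s J A * p s))"
    by (simp add: o_def)
  also have "\<dots> = complex_of_real (integral {l..m} (\<lambda>s. \<beta> s J A * p s))"
    by (rule integral_linear[OF ir bounded_linear_of_real])
  also have "integral {l..m} (\<lambda>s. \<beta> s J A * p s) = c * Rr J A 0"
    unfolding Rr_def p_def by (simp add: algebra_simps)
  finally have bc: "complex_of_real (\<gamma> 0 J A) * complex_of_real c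
       = integral {l..m} (\<lambda>s. complex_of_real (\<beta> s J A) * complex_of_real (p s))"
    using Req by (simp add: mult.commute)
  have G: "psi_graph \<beta> \<gamma> \<gamma>s \<mu> l m J A (\<lambda>s. complex_of_real (p s)) (\<lambda>s. 0 * complex_of_real (p s) - 0)"
    by (rule graph_construct[OF JA zero_absint pe bc])
  have G': "psi_graph \<beta> \<gamma> \<gamma>s \<mu> l m (integral {0..l} p) (integral {l..m} p) (\<lambda>s. complex_of_real (p s)) (\<lambda>s. 0)"
    using G unfolding pJ pA by simp
  have pos: "\<forall>s\<in>{0..m}. 0 \<le> p s" unfolding p_def using c0 Er_pos by (simp add: less_imp_le)
  have "{s\<in>{0..m}. p s \<noteq> 0} = cbox 0 m" unfolding p_def Er_def using c0 by (auto simp: box_real)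
  moreover have "\<not> negligible (cbox 0 m)" using m_pos negligible_interval(1)[of 0 m] by (simp add: box_real)
  ultimately have nn: "\<not> negligible {s\<in>{0..m}. p s \<noteq> 0}" by simp
  show ?thesis using pos nn G' by blast
qed

end

theorem mainTheorem11:
  fixes \<beta> \<gamma> \<gamma>s \<mu> :: "real \<Rightarrow> real \<Rightarrow> real \<Rightarrow> real"
    and l m \<gamma>0 r R :: real
  assumes lm: "0 < l" "l < m"
    and cont_\<beta>: "continuous_on ({0..m} \<times> ({0..} \<times> {0..})) (\<lambda>(s, J, A). \<beta> s J A)"
    and cont_\<gamma>: "continuous_on ({0..m} \<times> ({0..} \<times> {0..})) (\<lambda>(s, J, A). \<gamma> s J A)"
    and cont_\<mu>: "continuous_on ({0..m} \<times> ({0..} \<times> {0..})) (\<lambda>(s, J, A). \<mu> s J A)"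
    and nonneg: "\<And>s J A. s \<in> {0..m} \<Longrightarrow> 0 \<le> J \<Longrightarrow> 0 \<le> A \<Longrightarrow>
                   0 \<le> \<beta> s J A \<and> 0 \<le> \<gamma> s J A \<and> 0 \<le> \<mu> s J A"
    and \<beta>_zero: "\<And>s J A. s \<in> {0..<l} \<Longrightarrow> 0 \<le> J \<Longrightarrow> 0 \<le> A \<Longrightarrow> \<beta> s J A = 0"
    and \<gamma>_deriv: "\<And>s J A. s \<in> {0..m} \<Longrightarrow> 0 \<le> J \<Longrightarrow> 0 \<le> A \<Longrightarrow>
                   ((\<lambda>t. \<gamma> t J A) has_real_derivative \<gamma>s s J A) (at s within {0..m})"
    and cont_\<gamma>s: "continuous_on ({0..m} \<times> ({0..} \<times> {0..})) (\<lambda>(s, J, A). \<gamma>s s J A)"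
    and \<gamma>0: "0 < \<gamma>0" "\<And>s J A. s \<in> {0..m} \<Longrightarrow> 0 \<le> J \<Longrightarrow> 0 \<le> A \<Longrightarrow> \<gamma>0 \<le> \<gamma> s J A"
    and \<beta>_pos: "\<exists>\<epsilon>>0. \<epsilon> \<le> m \<and>
                 (\<forall>J A. 0 \<le> J \<longrightarrow> 0 \<le> A \<longrightarrow> integral {m - \<epsilon>..m} (\<lambda>s. \<beta> s J A) > 0)"
    and rR: "0 < r" "r < R"
    and small: "\<And>J A. 0 \<le> J \<Longrightarrow> 0 \<le> A \<Longrightarrow> J + A \<le> r \<Longrightarrow>
                  psi_spectral_bound \<beta> \<gamma> \<gamma>s \<mu> l m J A > 0"
    and large: "\<And>J A. 0 \<le> J \<Longrightarrow> 0 \<le> A \<Longrightarrow> R \<le> J + A \<Longrightarrow>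
                  psi_spectral_bound \<beta> \<gamma> \<gamma>s \<mu> l m J A < 0"
  shows "\<exists>p :: real \<Rightarrow> real.
           (\<forall>s\<in>{0..m}. 0 \<le> p s) \<and>
           \<not> negligible {s\<in>{0..m}. p s \<noteq> 0} \<and>
           psi_graph \<beta> \<gamma> \<gamma>s \<mu> l m (integral {0..l} p) (integral {l..m} p)
             (\<lambda>s. complex_of_real (p s)) (\<lambda>s. 0)"
  proof -
  have M: "model \<beta> \<gamma> \<gamma>s \<mu> l m \<gamma>0"
    unfolding model_def using lm cont_\<beta> cont_\<gamma> cont_\<mu> nonneg \<beta>_zero cont_\<gamma>s \<gamma>0 by blast
  show ?thesis by (rule model.steady[OF M rR small large])
qed

end
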